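(* Let $G$ be a tree with vertices $1,2,\ldots,n$ and edges $e_1,\ldots,e_{n-1}$, and let $M$ be its $n\times(n-1)$ vertex-edge incidence matrix. Define the $(n-1)\times n$ matrix $H=[h_{i,j}]$ (rows indexed by edges, columns by vertices) by $$h_{i,j}=\frac{(-1)^{d(e_i,j)}}{n}\begin{cases}|G_T(e_i)| & \text{if } j\in G_H(e_i),\\ |G_H(e_i)| & \text{if } j\in G_T(e_i).\end{cases}$$ Then $H$ is the Moore-Penrose inverse $M^+$ of $M$.
   Context: Each edge is written $e_i=\{l_i,m_i\}$ with $l_i<m_i$. The incidence matrix $M$ has $(i,j)$-entry $1$ if vertex $i$ is incident with edge $e_j$ and $0$ otherwise. $d(u,v)$ denotes the usual graph distance between vertices; for a vertex $j$ and edge $e_i=\{l_i,m_i\}$, $d(j,e_i)=d(e_i,j):=\min\{d(j,l_i),d(j,m_i)\}$. The head component $G_H(e_i)$ is the connected component of $G\setminus e_i$ containing $m_i$; the tail component $G_T(e_i)$ is the component of $G\setminus e_i$ containing $l_i$. $|X|$ denotes the number of vertices of a graph $X$. The Moore-Penrose inverse of a real $p\times q$ matrix $A$ is the unique $q\times p$ real matrix $A^+$ with $AA^+A=A$, $A^+AA^+=A^+$, $(AA^+)^T=AA^+$, $(A^+A)^T=A^+A$. *)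

theory Defs
  imports "Jordan_Normal_Form.Matrix"
begin

text \<open>A simple graph on vertex set {0..<n} whose edges are given by a list es of pairs (l,m)
  with l < m; edge e_i is es ! i (0-based indices).\<close>

definition adj :: "(nat \<times> nat) list \<Rightarrow> nat \<Rightarrow> nat \<Rightarrow> bool" where
  "adj es u v \<longleftrightarrow> (u, v) \<in> set es \<or> (v, u) \<in> set es"

definition connected_graph :: "nat \<Rightarrow> (nat \<times> nat) list \<Rightarrow> bool" where
  "connected_graph n es \<longleftrightarrow> (\<forall>u<n. \<forall>v<n. (adj es)\<^sup>*\<^sup>* u v)"

definition is_cycle :: "(nat \<times> nat) list \<Rightarrow> nat list \<Rightarrow> bool" where
  "is_cycle es cs \<longleftrightarrow> length cs \<ge> 3 \<and> distinct cs \<and>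
     (\<forall>k. Suc k < length cs \<longrightarrow> adj es (cs ! k) (cs ! Suc k)) \<and>
     adj es (last cs) (hd cs)"

definition is_tree :: "nat \<Rightarrow> (nat \<times> nat) list \<Rightarrow> bool" where
  "is_tree n es \<longleftrightarrow> n \<ge> 1 \<and> distinct es \<and> (\<forall>(l, m) \<in> set es. l < m \<and> m < n)
     \<and> connected_graph n es \<and> \<not> (\<exists>cs. is_cycle es cs)"

definition gdist :: "(nat \<times> nat) list \<Rightarrow> nat \<Rightarrow> nat \<Rightarrow> nat" where
  "gdist es u v = (LEAST k. (adj es ^^ k) u v)"

definition edist :: "(nat \<times> nat) list \<Rightarrow> nat \<Rightarrow> nat \<Rightarrow> nat" where
  "edist es i j = min (gdist es j (fst (es ! i))) (gdist es j (snd (es ! i)))"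

definition del_edge :: "(nat \<times> nat) list \<Rightarrow> nat \<Rightarrow> (nat \<times> nat) list" where
  "del_edge es i = filter (\<lambda>e. e \<noteq> es ! i) es"

definition comp_del :: "nat \<Rightarrow> (nat \<times> nat) list \<Rightarrow> nat \<Rightarrow> nat \<Rightarrow> nat set" where
  "comp_del n es i x = {v. v < n \<and> (adj (del_edge es i))\<^sup>*\<^sup>* x v}"

definition head_comp :: "nat \<Rightarrow> (nat \<times> nat) list \<Rightarrow> nat \<Rightarrow> nat set" where
  "head_comp n es i = comp_del n es i (snd (es ! i))"

definition tail_comp :: "nat \<Rightarrow> (nat \<times> nat) list \<Rightarrow> nat \<Rightarrow> nat set" where
  "tail_comp n es i = comp_del n es i (fst (es ! i))"

definition incidence_mat :: "nat \<Rightarrow> (nat \<times> nat) list \<Rightarrow> real mat" where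
  "incidence_mat n es = mat n (length es)
     (\<lambda>(v, i). if v = fst (es ! i) \<or> v = snd (es ! i) then 1 else 0)"

definition H_mat :: "nat \<Rightarrow> (nat \<times> nat) list \<Rightarrow> real mat" where
  "H_mat n es = mat (length es) n (\<lambda>(i, j).
     (-1) ^ edist es i j / real n *
     (if j \<in> head_comp n es i then real (card (tail_comp n es i))
      else if j \<in> tail_comp n es i then real (card (head_comp n es i)) else 0))"

definition is_moore_penrose_inverse :: "real mat \<Rightarrow> real mat \<Rightarrow> bool" where
  "is_moore_penrose_inverse A B \<longleftrightarrow>
     dim_row B = dim_col A \<and> dim_col B = dim_row A \<and>
     A * B * A = A \<and> B * A * B = B \<and>
     transpose_mat (A * B) = A * B \<and> transpose_mat (B * A) = B * A"

end

theory Submission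
  imports Defs "Jordan_Normal_Form.Determinant" "HOL-Library.Transitive_Closure_Table"
begin

lemma rtranclp_sym_rel:
  assumes "\<And>u v. R u v \<Longrightarrow> R v u" and "R\<^sup>*\<^sup>* x y"
  shows "R\<^sup>*\<^sup>* y x"
  using assms(2)
proof induction
  case base then show ?case by simp
next
  case (step y z) then show ?case using assms(1) by (meson converse_rtranclp_into_rtranclp)
qed

lemma cover_gen:
  assumes only: "\<And>u v. R u v \<Longrightarrow> \<not> R' u v \<Longrightarrow> (u=a \<and> v=b) \<or> (u=b \<and> v=a)"
  and "R\<^sup>*\<^sup>* x v"
  shows "R'\<^sup>*\<^sup>* x v \<or> R'\<^sup>*\<^sup>* a v \<or> R'\<^sup>*\<^sup>* b v"
  using assms(2)
proof induction
  case base then show ?case by simp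
next
  case (step y z)
  show ?case
  proof (cases "R' y z")
    case True then show ?thesis using step.IH by (meson rtranclp.rtrancl_into_rtrancl)
  next
    case False then have "z = a \<or> z = b" using only step.hyps(2) by blast
    then show ?thesis by auto
  qed
qed

lemma dist_gen:
  assumes only: "\<And>u v. R u v \<Longrightarrow> \<not> R' u v \<Longrightarrow> (u=a \<and> v=b) \<or> (u=b \<and> v=a)"
  and symR: "\<And>u v. R' u v \<Longrightarrow> R' v u"
  and nc: "\<not> R'\<^sup>*\<^sup>* a b"
  and hj: "R'\<^sup>*\<^sup>* b j"
  shows "(R^^k) j v \<Longrightarrow> R'\<^sup>*\<^sup>* a v \<Longrightarrow> Suc (LEAST k. (R^^k) j b) \<le> k"
proof (induction k arbitrary: v)
  case 0
  then have "v = j" by simp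
  have "R'\<^sup>*\<^sup>* j b" using rtranclp_sym_rel[of R', OF symR hj] .
  then have "R'\<^sup>*\<^sup>* a b" using 0(2) \<open>v = j\<close> by (meson rtranclp_trans)
  then show ?case using nc by simp
next
  case (Suc k)
  from Suc.prems(1) obtain w where w1: "(R^^k) j w" and w2: "R w v" by auto
  have "R\<^sup>*\<^sup>* j w" using w1 relpowp_imp_rtranclp by metis
  from cover_gen[OF only this] have "R'\<^sup>*\<^sup>* j w \<or> R'\<^sup>*\<^sup>* a w \<or> R'\<^sup>*\<^sup>* b w" .
  then have "R'\<^sup>*\<^sup>* a w \<or> R'\<^sup>*\<^sup>* b w" using hj by (meson rtranclp_trans)
  then show ?case
  proof
    assume "R'\<^sup>*\<^sup>* a w"
    from Suc.IH[OF w1 this] show ?thesis by simp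
  next
    assume bw: "R'\<^sup>*\<^sup>* b w"
    show ?thesis
    proof (cases "R' w v")
      case True
      then have "R'\<^sup>*\<^sup>* b v" using bw by (meson rtranclp.rtrancl_into_rtrancl)
      then have "R'\<^sup>*\<^sup>* v b" using rtranclp_sym_rel[of R' b v] symR by blast
      then have "R'\<^sup>*\<^sup>* a b" using Suc.prems(2) by (meson rtranclp_trans)
      then show ?thesis using nc by simp
    next
      case False
      then have "(w=a \<and> v=b) \<or> (w=b \<and> v=a)" using only w2 by blast
      then show ?thesis
      proof
        assume "w = a \<and> v = b"
        then have "R'\<^sup>*\<^sup>* a b" using Suc.prems(2) by simp
        then show ?thesis using nc by simp
      next
        assume "w = b \<and> v = a"
        then have "(R^^k) j b" using w1 by simp
        then have "(LEAST k. (R^^k) j b) \<le> k" by (rule Least_le)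
        then show ?thesis by simp
      qed
    qed
  qed
qed

lemma rtrancl_path_nth:
  "rtrancl_path r x xs y \<Longrightarrow>
   (\<forall>k. Suc k < length (x#xs) \<longrightarrow> r ((x#xs)!k) ((x#xs)!Suc k)) \<and> last (x#xs) = y"
proof (induction rule: rtrancl_path.induct)
  case (base x) then show ?case by simp
next
  case (step x y ys z)
  have "r ((x#y#ys)!k) ((x#y#ys)!Suc k)" if "Suc k < length (x#y#ys)" for k
  proof (cases k)
    case 0 then show ?thesis using step by simp
  next
    case (Suc k') then show ?thesis using step that by auto
  qed
  then show ?case using step by simp
qed

lemma adj_sym: "adj es u v = adj es v u"
  by (auto simp: adj_def)

lemma del_sub: "adj (del_edge es i) u v \<Longrightarrow> adj es u v"
  by (auto simp: adj_def del_edge_def)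

lemma del_sym: "adj (del_edge es i) u v \<Longrightarrow> adj (del_edge es i) v u"
  by (auto simp: adj_def)

lemma del_only: "adj es u v \<Longrightarrow> \<not> adj (del_edge es i) u v \<Longrightarrow>
   (u = fst (es!i) \<and> v = snd (es!i)) \<or> (u = snd (es!i) \<and> v = fst (es!i))"
  by (cases "es!i") (auto simp: adj_def del_edge_def)

lemma del_other: "k < length es \<Longrightarrow> i < length es \<Longrightarrow> k \<noteq> i \<Longrightarrow> distinct es \<Longrightarrow>
   adj (del_edge es i) (fst (es!k)) (snd (es!k))"
  by (auto simp: adj_def del_edge_def nth_eq_iff_index_eq)

lemma sum_two:
  fixes f :: "nat \<Rightarrow> real"
  assumes "a < N" "b < N" "a \<noteq> b"
  shows "(\<Sum>j\<in>{0..<N}. f j * (if j = a \<or> j = b then 1 else 0)) = f a + f b"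
proof -
  have "(\<Sum>j\<in>{0..<N}. f j * (if j = a \<or> j = b then 1 else 0)) = (\<Sum>j\<in>{0..<N}. if j \<in> {a,b} then f j else 0)"
    by (rule sum.cong) auto
  also have "... = sum f ({0..<N} \<inter> {a,b})" by (simp add: sum.inter_restrict)
  also have "{0..<N} \<inter> {a,b} = {a,b}" using assms by auto
  also have "sum f {a,b} = f a + f b" using assms by simp
  finally show ?thesis .
qed

context
  fixes n :: nat and es :: "(nat \<times> nat) list"
  assumes T: "is_tree n es"
begin

lemma t_edge: "(u,v) \<in> set es \<Longrightarrow> u < v \<and> v < n"
  using T unfolding is_tree_def by auto

lemma t_nth: "i < length es \<Longrightarrow> fst (es!i) < snd (es!i) \<and> snd (es!i) < n"
  using t_edge[of "fst (es!i)" "snd (es!i)"] nth_mem[of i es] by auto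

lemma t_adj_lt: "adj es u v \<Longrightarrow> u < n \<and> v < n"
  using t_edge unfolding adj_def by force

lemma t_conn: "u < n \<Longrightarrow> v < n \<Longrightarrow> (adj es)\<^sup>*\<^sup>* u v"
  using T unfolding is_tree_def connected_graph_def by auto

lemma t_n: "0 < n" using T unfolding is_tree_def by auto

lemma gdist_attained: "u < n \<Longrightarrow> v < n \<Longrightarrow> (adj es ^^ gdist es u v) u v"
  unfolding gdist_def using t_conn[of u v] rtranclp_imp_relpowp by (metis LeastI_ex)

lemma not_conn:
  assumes i: "i < length es"
  shows "\<not> (adj (del_edge es i))\<^sup>*\<^sup>* (snd (es!i)) (fst (es!i))"
proof
  let ?R = "adj (del_edge es i)"
  let ?l = "fst (es!i)" and ?m = "snd (es!i)"
  assume "?R\<^sup>*\<^sup>* ?m ?l"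
  then obtain xs where "rtrancl_path ?R ?m xs ?l" using rtranclp_eq_rtrancl_path by metis
  then obtain xs' where p: "rtrancl_path ?R ?m xs' ?l" and d: "distinct (?m # xs')"
    using rtrancl_path_distinct by metis
  have lm: "?l < ?m" using t_nth[OF i] by simp
  from rtrancl_path_nth[OF p] have cons: "\<forall>k. Suc k < length (?m#xs') \<longrightarrow> ?R ((?m#xs')!k) ((?m#xs')!Suc k)"
    and la: "last (?m#xs') = ?l" by auto
  have ne: "xs' \<noteq> []" using la lm by auto
  have "length xs' \<noteq> 1"
  proof
    assume "length xs' = 1"
    then obtain y where y: "xs' = [y]" by (metis One_nat_def length_0_conv length_Suc_conv)
    then have "y = ?l" using la by simp
    then have "?R ?m ?l" using cons y by force
    then have "(?m, ?l) \<in> set es \<or> ((?l, ?m) \<in> set es \<and> (?l, ?m) \<noteq> es ! i)"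
      unfolding adj_def del_edge_def by auto
    then show False using t_edge[of ?m ?l] lm by auto
  qed
  then have len: "length (?m#xs') \<ge> 3" using ne by (cases xs') (auto simp: Suc_le_eq)
  have "is_cycle es (?m#xs')"
    unfolding is_cycle_def
  proof (intro conjI allI impI)
    show "3 \<le> length (?m#xs')" by (rule len)
    show "distinct (?m#xs')" by (rule d)
    fix k assume "Suc k < length (?m#xs')"
    then show "adj es ((?m#xs')!k) ((?m#xs')!Suc k)" using cons del_sub by blast
  next
    have "es ! i \<in> set es" using i by simp
    then have "(?l, ?m) \<in> set es" by simp
    then show "adj es (last (?m#xs')) (hd (?m#xs'))" using la by (simp add: adj_def)
  qed
  then show False using T unfolding is_tree_def by blast
qed

lemma hc_iff: "j \<in> head_comp n es i \<longleftrightarrow> j < n \<and> (adj (del_edge es i))\<^sup>*\<^sup>* (snd (es!i)) j"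
  unfolding head_comp_def comp_del_def by simp

lemma tc_iff: "j \<in> tail_comp n es i \<longleftrightarrow> j < n \<and> (adj (del_edge es i))\<^sup>*\<^sup>* (fst (es!i)) j"
  unfolding tail_comp_def comp_del_def by simp

lemma cover:
  assumes i: "i < length es" and j: "j < n"
  shows "j \<in> head_comp n es i \<or> j \<in> tail_comp n es i"
proof -
  have "(adj es)\<^sup>*\<^sup>* (snd (es!i)) j" using t_conn t_nth[OF i] j by blast
  from cover_gen[OF del_only this] show ?thesis using j by (auto simp: hc_iff tc_iff)
qed

lemma disj:
  assumes i: "i < length es" and h: "j \<in> head_comp n es i"
  shows "j \<notin> tail_comp n es i"
proof
  assume "j \<in> tail_comp n es i"
  then have a: "(adj (del_edge es i))\<^sup>*\<^sup>* (fst (es!i)) j" by (simp add: tc_iff)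
  have "(adj (del_edge es i))\<^sup>*\<^sup>* (snd (es!i)) j" using h by (simp add: hc_iff)
  moreover have "(adj (del_edge es i))\<^sup>*\<^sup>* j (fst (es!i))"
    using rtranclp_sym_rel[of "adj (del_edge es i)", OF del_sym a] .
  ultimately have "(adj (del_edge es i))\<^sup>*\<^sup>* (snd (es!i)) (fst (es!i))" by (meson rtranclp_trans)
  then show False using not_conn[OF i] by simp
qed

lemma hc_sub: "head_comp n es i \<subseteq> {0..<n}" by (auto simp: hc_iff)
lemma tc_sub: "tail_comp n es i \<subseteq> {0..<n}" by (auto simp: tc_iff)

lemma compl_hc: "i < length es \<Longrightarrow> {0..<n} - head_comp n es i = tail_comp n es i"
  using cover disj tc_sub by fastforce

lemma card_ht: "i < length es \<Longrightarrow> card (head_comp n es i) + card (tail_comp n es i) = n"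
proof -
  assume i: "i < length es"
  have u: "head_comp n es i \<union> tail_comp n es i = {0..<n}" using cover[OF i] hc_sub tc_sub by fastforce
  have d: "head_comp n es i \<inter> tail_comp n es i = {}" using disj[OF i] by blast
  have f1: "finite (head_comp n es i)" using finite_subset[OF hc_sub] by simp
  have f2: "finite (tail_comp n es i)" using finite_subset[OF tc_sub] by simp
  have "card (head_comp n es i \<union> tail_comp n es i) = card (head_comp n es i) + card (tail_comp n es i)"
    by (rule card_Un_disjoint[OF f1 f2 d])
  then show ?thesis unfolding u by simp
qed

lemma dist_head:
  assumes i: "i < length es" and h: "j \<in> head_comp n es i"
  shows "gdist es j (fst (es!i)) = Suc (gdist es j (snd (es!i)))"
proof -
  let ?l = "fst (es!i)" and ?m = "snd (es!i)" and ?R' = "adj (del_edge es i)"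
  have jn: "j < n" and hj: "?R'\<^sup>*\<^sup>* ?m j" using h by (auto simp: hc_iff)
  have lm: "?l < n" "?m < n" using t_nth[OF i] by auto
  have nc: "\<not> ?R'\<^sup>*\<^sup>* ?l ?m"
    using not_conn[OF i] rtranclp_sym_rel[of ?R', OF del_sym] by blast
  have "Suc (gdist es j ?m) \<le> gdist es j ?l"
    using dist_gen[of "adj es" ?R' ?l ?m, OF del_only del_sym nc hj gdist_attained[OF jn lm(1)]]
    unfolding gdist_def by simp
  moreover
  have "(adj es ^^ Suc (gdist es j ?m)) j ?l"
  proof -
    have "(adj es ^^ gdist es j ?m) j ?m" by (rule gdist_attained[OF jn lm(2)])
    moreover have "adj es ?m ?l" using nth_mem[OF i] by (auto simp: adj_def)
    ultimately show ?thesis by auto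
  qed
  then have "gdist es j ?l \<le> Suc (gdist es j ?m)" unfolding gdist_def by (rule Least_le)
  ultimately show ?thesis by simp
qed

lemma dist_tail:
  assumes i: "i < length es" and h: "j \<in> tail_comp n es i"
  shows "gdist es j (snd (es!i)) = Suc (gdist es j (fst (es!i)))"
proof -
  let ?l = "fst (es!i)" and ?m = "snd (es!i)" and ?R' = "adj (del_edge es i)"
  have jn: "j < n" and hj: "?R'\<^sup>*\<^sup>* ?l j" using h by (auto simp: tc_iff)
  have lm: "?l < n" "?m < n" using t_nth[OF i] by auto
  have nc: "\<not> ?R'\<^sup>*\<^sup>* ?m ?l" using not_conn[OF i] .
  have only: "\<And>u v. adj es u v \<Longrightarrow> \<not> ?R' u v \<Longrightarrow> (u = ?m \<and> v = ?l) \<or> (u = ?l \<and> v = ?m)"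
    using del_only by blast
  have "Suc (gdist es j ?l) \<le> gdist es j ?m"
    using dist_gen[of "adj es" ?R' ?m ?l, OF only del_sym nc hj gdist_attained[OF jn lm(2)]]
    unfolding gdist_def by simp
  moreover
  have "(adj es ^^ Suc (gdist es j ?l)) j ?m"
  proof -
    have "(adj es ^^ gdist es j ?l) j ?l" by (rule gdist_attained[OF jn lm(1)])
    moreover have "adj es ?l ?m" using nth_mem[OF i] by (auto simp: adj_def)
    ultimately show ?thesis by auto
  qed
  then have "gdist es j ?m \<le> Suc (gdist es j ?l)" unfolding gdist_def by (rule Least_le)
  ultimately show ?thesis by simp
qed

definition sv :: "nat \<Rightarrow> real" where "sv j = (-1) ^ gdist es 0 j"

lemma sv_sq: "sv u * sv u = 1"
  unfolding sv_def power_mult_distrib[symmetric] by simp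

lemma edge_par: "k < length es \<Longrightarrow> sv (fst (es!k)) = - sv (snd (es!k))"
proof -
  assume k: "k < length es"
  from cover[OF k t_n] show ?thesis
  proof
    assume "0 \<in> head_comp n es k"
    from dist_head[OF k this] show ?thesis by (simp add: sv_def)
  next
    assume "0 \<in> tail_comp n es k"
    from dist_tail[OF k this] show ?thesis by (simp add: sv_def)
  qed
qed

lemma adj_par: "adj es u v \<Longrightarrow> sv v = - sv u"
proof -
  assume "adj es u v"
  then have "(u,v) \<in> set es \<or> (v,u) \<in> set es" by (simp add: adj_def)
  then show ?thesis
  proof
    assume "(u,v) \<in> set es"
    then obtain k where "k < length es" "es!k = (u,v)" by (metis in_set_conv_nth)
    then show ?thesis using edge_par[of k] by simp
  next
    assume "(v,u) \<in> set es"
    then obtain k where "k < length es" "es!k = (v,u)" by (metis in_set_conv_nth)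
    then show ?thesis using edge_par[of k] by simp
  qed
qed

lemma walk_par: "(adj es ^^ k) u v \<Longrightarrow> (-1::real) ^ k = sv u * sv v"
proof (induction k arbitrary: v)
  case 0 then show ?case using sv_sq by simp
next
  case (Suc k)
  then obtain w where "(adj es ^^ k) u w" "adj es w v" by auto
  with Suc.IH adj_par show ?case by fastforce
qed

lemma edist_head: "i < length es \<Longrightarrow> j \<in> head_comp n es i \<Longrightarrow>
  (-1::real) ^ edist es i j = sv j * sv (snd (es!i))"
proof -
  assume i: "i < length es" and h: "j \<in> head_comp n es i"
  have e: "edist es i j = gdist es j (snd (es!i))" using dist_head[OF i h] by (simp add: edist_def)
  have "(adj es ^^ gdist es j (snd (es!i))) j (snd (es!i))"
    using gdist_attained t_nth[OF i] h by (auto simp: hc_iff)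
  from walk_par[OF this] show ?thesis unfolding e .
qed

lemma edist_tail: "i < length es \<Longrightarrow> j \<in> tail_comp n es i \<Longrightarrow>
  (-1::real) ^ edist es i j = sv j * sv (fst (es!i))"
proof -
  assume i: "i < length es" and h: "j \<in> tail_comp n es i"
  have e: "edist es i j = gdist es j (fst (es!i))" using dist_tail[OF i h] by (simp add: edist_def)
  have "(adj es ^^ gdist es j (fst (es!i))) j (fst (es!i))"
    using gdist_attained t_nth[OF i] h by (auto simp: tc_iff)
  from walk_par[OF this] show ?thesis unfolding e .
qed

lemma H_gen: "i < length es \<Longrightarrow> j < n \<Longrightarrow> H_mat n es $$ (i,j) =
  (-1) ^ edist es i j / real n *
     (if j \<in> head_comp n es i then real (card (tail_comp n es i))
      else if j \<in> tail_comp n es i then real (card (head_comp n es i)) else 0)"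
  unfolding H_mat_def by simp

lemma H_entry: "i < length es \<Longrightarrow> j < n \<Longrightarrow> H_mat n es $$ (i,j) =
  sv j * (if j \<in> head_comp n es i then sv (snd (es!i)) * card (tail_comp n es i) / n
   else sv (fst (es!i)) * card (head_comp n es i) / n)"
proof -
  assume i: "i < length es" and j: "j < n"
  show ?thesis
  proof (cases "j \<in> head_comp n es i")
    case True
    have e: "(-1::real) ^ edist es i j = sv j * sv (snd (es!i))" by (rule edist_head[OF i True])
    show ?thesis unfolding H_gen[OF i j] e using True by simp
  next
    case False
    then have tj: "j \<in> tail_comp n es i" using cover i j by blast
    have e: "(-1::real) ^ edist es i j = sv j * sv (fst (es!i))" by (rule edist_tail[OF i tj])
    have "H_mat n es $$ (i,j) = sv j * sv (fst (es!i)) / real n * real (card (head_comp n es i))"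
      unfolding H_gen[OF i j] e using False tj by (simp only: if_False if_True)
    also have "... = sv j * (sv (fst (es!i)) * real (card (head_comp n es i)) / real n)" by simp
    finally show ?thesis using False by (simp only: if_False)
  qed
qed

lemma sv_cancel: "sv j * Y * sv j = Y"
proof -
  have "sv j * Y * sv j = (sv j * sv j) * Y" by (simp add: mult.commute mult.left_commute)
  then show ?thesis using sv_sq by simp
qed

lemma M_entry: "j < n \<Longrightarrow> k < length es \<Longrightarrow> incidence_mat n es $$ (j,k) =
   (if j = fst (es!k) \<or> j = snd (es!k) then 1 else 0)"
  unfolding incidence_mat_def by simp

lemma HM_entry:
  assumes r: "r < length es" and c: "c < length es"
  shows "(\<Sum>j\<in>{0..<n}. H_mat n es $$ (r,j) * incidence_mat n es $$ (j,c)) = (if r = c then 1 else 0)"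
proof -
  let ?H = "H_mat n es"
  let ?a = "fst (es!c)" and ?b = "snd (es!c)"
  have ab: "?a < n" "?b < n" "?a \<noteq> ?b" using t_nth[OF c] by auto
  have "(\<Sum>j\<in>{0..<n}. ?H $$ (r,j) * incidence_mat n es $$ (j,c))
     = (\<Sum>j\<in>{0..<n}. ?H $$ (r,j) * (if j = ?a \<or> j = ?b then 1 else 0))"
    by (rule sum.cong) (auto simp: M_entry c)
  also have "... = ?H $$ (r, ?a) + ?H $$ (r, ?b)" by (rule sum_two[OF ab])
  also have "... = (if r = c then 1 else 0)"
  proof (cases "r = c")
    case True
    have at: "?a \<in> tail_comp n es r" using ab True by (simp add: tc_iff)
    then have ah: "?a \<notin> head_comp n es r" using disj[OF r] by blast
    have bh: "?b \<in> head_comp n es r" using ab True by (simp add: hc_iff)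
    have "?H $$ (r, ?a) + ?H $$ (r, ?b) =
        sv ?a * (sv ?a * card (head_comp n es r) / n) + sv ?b * (sv ?b * card (tail_comp n es r) / n)"
      using H_entry[OF r ab(1)] H_entry[OF r ab(2)] ah bh True by simp
    also have "... = (card (head_comp n es r) + card (tail_comp n es r)) / n"
      using sv_sq[of ?a] sv_sq[of ?b] by (simp add: mult.assoc[symmetric] add_divide_distrib)
    also have "... = 1" using card_ht[OF r] t_n by simp
    finally show ?thesis using True by simp
  next
    case False
    have ad: "adj (del_edge es r) ?a ?b" using del_other[OF c r] False T by (simp add: is_tree_def)
    have same: "?a \<in> head_comp n es r \<longleftrightarrow> ?b \<in> head_comp n es r"
    proof
      assume "?a \<in> head_comp n es r"
      then show "?b \<in> head_comp n es r" using ad ab by (auto simp: hc_iff intro: rtranclp.rtrancl_into_rtrancl)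
    next
      assume "?b \<in> head_comp n es r"
      then show "?a \<in> head_comp n es r" using del_sym[OF ad] ab by (auto simp: hc_iff intro: rtranclp.rtrancl_into_rtrancl)
    qed
    have p: "sv ?a = - sv ?b" by (rule edge_par[OF c])
    show ?thesis
    proof (cases "?a \<in> head_comp n es r")
      case True
      then show ?thesis using H_entry[OF r ab(1)] H_entry[OF r ab(2)] same p False by simp
    next
      case F2: False
      then show ?thesis using H_entry[OF r ab(1)] H_entry[OF r ab(2)] same p False by simp
    qed
  qed
  finally show ?thesis .
qed

lemma Hs:
  assumes r: "r < length es"
  shows "(\<Sum>j\<in>{0..<n}. H_mat n es $$ (r,j) * sv j) = 0"
proof -
  let ?hd = "head_comp n es r" and ?tl = "tail_comp n es r"
  let ?X = "sv (snd (es!r)) * card ?tl / n" and ?Y = "sv (fst (es!r)) * card ?hd / n"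
  have "(\<Sum>j\<in>{0..<n}. H_mat n es $$ (r,j) * sv j) = (\<Sum>j\<in>{0..<n}. if j \<in> ?hd then ?X else ?Y)"
  proof (rule sum.cong)
    fix j assume "j \<in> {0..<n}"
    then have j: "j < n" by simp
    have "H_mat n es $$ (r,j) * sv j = sv j * (if j \<in> ?hd then ?X else ?Y) * sv j"
      using H_entry[OF r j] by simp
    also have "... = (if j \<in> ?hd then ?X else ?Y)" by (rule sv_cancel)
    finally show "H_mat n es $$ (r,j) * sv j = (if j \<in> ?hd then ?X else ?Y)" .
  qed simp
  also have "... = (\<Sum>j\<in>{0..<n} \<inter> {x. x \<in> ?hd}. ?X) + (\<Sum>j\<in>{0..<n} \<inter> - {x. x \<in> ?hd}. ?Y)"
    by (rule sum.If_cases) simp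
  also have "{0..<n} \<inter> {x. x \<in> ?hd} = ?hd" using hc_sub by blast
  also have "{0..<n} \<inter> - {x. x \<in> ?hd} = ?tl" using compl_hc[OF r] by blast
  also have "(\<Sum>j\<in>?hd. ?X) + (\<Sum>j\<in>?tl. ?Y) = card ?hd * ?X + card ?tl * ?Y" by simp
  also have "... = 0" using edge_par[OF r] by (simp add: algebra_simps)
  finally show ?thesis .
qed

lemma mp_main:
  assumes len: "length es = n - 1"
  shows "is_moore_penrose_inverse (incidence_mat n es) (H_mat n es)"
proof -
  define m where "m = length es"
  define M where "M = incidence_mat n es"
  define H where "H = H_mat n es"
  have nm: "n = Suc m" using len t_n unfolding m_def by simp
  have Mc: "M \<in> carrier_mat n m" unfolding M_def m_def incidence_mat_def by simp
  have Hc: "H \<in> carrier_mat m n" unfolding H_def m_def H_mat_def by simp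
  have HMe: "(H * M) $$ (r,c) = (\<Sum>j\<in>{0..<n}. H $$ (r,j) * M $$ (j,c))" if "r < m" "c < m" for r c
    using that Mc Hc by (simp add: scalar_prod_def)
  have HM: "H * M = 1\<^sub>m m"
  proof (rule eq_matI)
    fix r c assume "r < dim_row (1\<^sub>m m)" "c < dim_col (1\<^sub>m m)"
    then have rc: "r < m" "c < m" by auto
    show "(H * M) $$ (r,c) = 1\<^sub>m m $$ (r,c)"
      unfolding HMe[OF rc] using HM_entry[of r c] rc unfolding H_def M_def m_def by simp
  qed (use Mc Hc in auto)
  define N where "N = mat n n (\<lambda>(u,c). if c < m then M $$ (u,c) else sv u)"
  define K where "K = mat n n (\<lambda>(r,v). if r < m then H $$ (r,v) else sv v / n)"
  have Nc: "N \<in> carrier_mat n n" unfolding N_def by simp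
  have Kc: "K \<in> carrier_mat n n" unfolding K_def by simp
  have KN: "K * N = 1\<^sub>m n"
  proof (rule eq_matI)
    fix r c assume "r < dim_row (1\<^sub>m n)" "c < dim_col (1\<^sub>m n)"
    then have rc: "r < n" "c < n" by auto
    have e: "(K * N) $$ (r,c) = (\<Sum>u\<in>{0..<n}. K $$ (r,u) * N $$ (u,c))"
      using rc Kc Nc by (simp add: scalar_prod_def)
    show "(K * N) $$ (r,c) = 1\<^sub>m n $$ (r,c)"
    proof (cases "r < m")
      case True
      note r = True
      show ?thesis
      proof (cases "c < m")
        case True
        have "(K * N) $$ (r,c) = (\<Sum>u\<in>{0..<n}. H $$ (r,u) * M $$ (u,c))"
          unfolding e by (rule sum.cong) (use rc r True in \<open>auto simp: K_def N_def\<close>)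
        also have "... = (if r = c then 1 else 0)" using HM_entry[of r c] r True
          unfolding H_def M_def m_def by simp
        finally show ?thesis using rc by simp
      next
        case False
        have "(K * N) $$ (r,c) = (\<Sum>u\<in>{0..<n}. H $$ (r,u) * sv u)"
          unfolding e by (rule sum.cong) (use rc r False in \<open>auto simp: K_def N_def\<close>)
        also have "... = 0" using Hs[of r] r unfolding H_def m_def by simp
        finally show ?thesis using rc r False by simp
      qed
    next
      case False
      then have rm: "r = m" using rc nm by simp
      show ?thesis
      proof (cases "c < m")
        case True
        have ab: "fst (es!c) < n" "snd (es!c) < n" "fst (es!c) \<noteq> snd (es!c)"
          using t_nth[of c] True unfolding m_def by auto
        have "(K * N) $$ (r,c) = (\<Sum>u\<in>{0..<n}. (sv u / n) *
              (if u = fst (es!c) \<or> u = snd (es!c) then 1 else 0))"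
          unfolding e by (rule sum.cong) (use rc rm True in \<open>auto simp: K_def N_def M_def M_entry m_def\<close>)
        also have "... = sv (fst (es!c)) / n + sv (snd (es!c)) / n" by (rule sum_two[OF ab])
        also have "... = 0" using edge_par[of c] True unfolding m_def by (simp add: add_divide_distrib[symmetric])
        finally show ?thesis using rc rm True by simp
      next
        case False
        then have cm: "c = m" using rc nm by simp
        have "(K * N) $$ (r,c) = (\<Sum>u\<in>{0..<n}. 1 / n)"
          unfolding e by (rule sum.cong) (use rc rm cm sv_sq in \<open>auto simp: K_def N_def\<close>)
        also have "... = 1" using t_n by simp
        finally show ?thesis using rc rm cm by simp
      qed
    qed
  qed (use Kc Nc in auto)
  have NK: "N * K = 1\<^sub>m n" by (rule mat_mult_left_right_inverse[OF Kc Nc KN])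
  have MHe: "(M * H) $$ (u,v) = (if u = v then 1 else 0) - sv u * sv v / n" if uv: "u < n" "v < n" for u v
  proof -
    have "(N * K) $$ (u,v) = (\<Sum>c\<in>{0..<n}. N $$ (u,c) * K $$ (c,v))"
      using uv Kc Nc by (simp add: scalar_prod_def)
    also have "... = (\<Sum>c\<in>{0..<m}. N $$ (u,c) * K $$ (c,v)) + N $$ (u,m) * K $$ (m,v)"
      unfolding nm by simp
    also have "(\<Sum>c\<in>{0..<m}. N $$ (u,c) * K $$ (c,v)) = (\<Sum>c\<in>{0..<m}. M $$ (u,c) * H $$ (c,v))"
      by (rule sum.cong) (use uv nm in \<open>auto simp: K_def N_def\<close>)
    also have "... = (M * H) $$ (u,v)" using uv Mc Hc by (simp add: scalar_prod_def)
    also have "N $$ (u,m) * K $$ (m,v) = sv u * sv v / n" using uv nm by (simp add: K_def N_def)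
    finally have "(M * H) $$ (u,v) = (N * K) $$ (u,v) - sv u * sv v / n" by simp
    then show ?thesis unfolding NK using uv by simp
  qed
  have MHs: "transpose_mat (M * H) = M * H"
  proof (rule eq_matI)
    fix u v assume "u < dim_row (M * H)" "v < dim_col (M * H)"
    then have uv: "u < n" "v < n" using Mc Hc by auto
    show "transpose_mat (M * H) $$ (u,v) = (M * H) $$ (u,v)"
      using MHe[OF uv] MHe[OF uv(2,1)] uv Mc Hc by (auto simp: mult.commute)
  qed (use Mc Hc in auto)
  have "M * H * M = M * (H * M)" using Mc Hc by (simp add: assoc_mult_mat)
  also have "... = M" using HM Mc by simp
  finally have MHM: "M * H * M = M" .
  have HMH: "H * M * H = H" using HM Hc by simp
  have "transpose_mat (H * M) = H * M" using HM by simp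
  then show ?thesis unfolding is_moore_penrose_inverse_def
    using Mc Hc MHM HMH MHs unfolding M_def[symmetric] H_def[symmetric] by simp
qed

end

theorem mainTheorem2:
  fixes n :: nat and es :: "(nat \<times> nat) list"
  assumes "is_tree n es" and "length es = n - 1"
  shows "is_moore_penrose_inverse (incidence_mat n es) (H_mat n es)"
  using mp_main[OF assms(1) assms(2)] .

end
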